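(* Let $F\in\mathcal{B}((\mathbb{C}^2)^{\otimes d})$ with $\|F\|\leq 1$, and fix $s_0\leq n-2$. Then \[ \big|\langle\psi_{s}|(F\otimes I^{\otimes n-d})|\psi_{s}\rangle-\langle\psi_{r}|(F\otimes I^{\otimes n-d})|\psi_{r}\rangle\big|=O\big(\sqrt{d s_0/n}\big)\qquad\text{for all } r,s\leq s_0, \] where the $O$-notation refers to $n\to\infty$.
   Context: On $n$ qubits, let $\omega=e^{2\pi i/n}$, $\sigma_m^-=|0\rangle\langle1|$ on qubit $m$, $S_-=\sum_{m=1}^n\sigma_m^-$, $|\Psi\rangle=\overline{\omega}\sum_{m=1}^n\omega^m\sigma_m^-|1\rangle^{\otimes n}$, and for $s=0,\dots,n-2$, $|\psi_s\rangle=S_-^s|\Psi\rangle/\|S_-^s|\Psi\rangle\|$. $F\otimes I^{\otimes(n-d)}$ acts as $F$ on the first $d$ qubits. *)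

theory Defs
  imports "HOL-Analysis.Analysis"
begin

text \<open>Computational basis of n qubits: bit strings b :: nat \<Rightarrow> bool supported on
  {0..<n}; qubit m (1-based, m = 1..n) is index m-1. True = |1>, False = |0>.\<close>

type_synonym bits = "nat \<Rightarrow> bool"
type_synonym qvec = "bits \<Rightarrow> complex"
type_synonym qop = "bits \<Rightarrow> bits \<Rightarrow> complex"

definition basis :: "nat \<Rightarrow> bits set" where
  "basis n = {b. \<forall>i\<ge>n. \<not> b i}"

definition inner_q :: "nat \<Rightarrow> qvec \<Rightarrow> qvec \<Rightarrow> complex" where
  "inner_q n u v = (\<Sum>b\<in>basis n. cnj (u b) * v b)"

definition norm_q :: "nat \<Rightarrow> qvec \<Rightarrow> real" where
  "norm_q n v = sqrt (\<Sum>b\<in>basis n. (cmod (v b))\<^sup>2)"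

definition apply_op :: "nat \<Rightarrow> qop \<Rightarrow> qvec \<Rightarrow> qvec" where
  "apply_op d F v = (\<lambda>b. \<Sum>a\<in>basis d. F b a * v a)"

definition op_norm_le1 :: "nat \<Rightarrow> qop \<Rightarrow> bool" where
  "op_norm_le1 d F \<longleftrightarrow> (\<forall>v. norm_q d (apply_op d F v) \<le> norm_q d v)"

text \<open>F \<otimes> I^(n-d): F acts on the first d qubits (indices 0..d-1).\<close>
definition tensor_id :: "nat \<Rightarrow> qop \<Rightarrow> qvec \<Rightarrow> qvec" where
  "tensor_id d F v = (\<lambda>b. \<Sum>a\<in>basis d.
      F (\<lambda>i. i < d \<and> b i) a * v (\<lambda>i. if i < d then a i else b i))"

definition sigma_minus :: "nat \<Rightarrow> qvec \<Rightarrow> qvec" where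
  "sigma_minus k v = (\<lambda>b. if b k then 0 else v (b(k := True)))"

definition S_minus :: "nat \<Rightarrow> qvec \<Rightarrow> qvec" where
  "S_minus n v = (\<lambda>b. \<Sum>k<n. sigma_minus k v b)"

definition all_ones :: "nat \<Rightarrow> qvec" where
  "all_ones n = (\<lambda>b. if b = (\<lambda>i. i < n) then 1 else 0)"

definition omega :: "nat \<Rightarrow> complex" where
  "omega n = cis (2 * pi / real n)"

definition Psi :: "nat \<Rightarrow> qvec" where
  "Psi n = (\<lambda>b. cnj (omega n) *
      (\<Sum>m\<in>{1..n}. omega n ^ m * sigma_minus (m - 1) (all_ones n) b))"

definition psi :: "nat \<Rightarrow> nat \<Rightarrow> qvec" where
  "psi n s = (let v = (S_minus n ^^ s) (Psi n)
              in (\<lambda>b. v b / complex_of_real (norm_q n v)))"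

definition expect :: "nat \<Rightarrow> qvec \<Rightarrow> (qvec \<Rightarrow> qvec) \<Rightarrow> complex" where
  "expect n v A = inner_q n v (A v)"

end

theory Submission
  imports Defs
begin

lemma finite_basis: "finite (basis n)"
proof -
  have "basis n \<subseteq> (\<lambda>S i. i \<in> S) ` Pow {..<n}"
  proof
    fix b assume "b \<in> basis n"
    hence "b = (\<lambda>i. i \<in> {i. i < n \<and> b i})" unfolding basis_def by (auto simp: not_le[symmetric])
    thus "b \<in> (\<lambda>S i. i \<in> S) ` Pow {..<n}" by blast
  qed
  thus ?thesis by (rule finite_subset) auto
qed

lemma omega_norm: "cmod (omega n) = 1"
  by (simp add: omega_def)

lemma omega_pow_n: "omega n ^ n = 1"
proof (cases "n = 0")
  case False
  have "omega n ^ n = cis (real n * (2 * pi / real n))" unfolding omega_def by (rule Complex.DeMoivre)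
  also have "\<dots> = 1" using False by simp
  finally show ?thesis .
qed simp

lemma omega_pow_mod: "omega n ^ (m mod n) = omega n ^ m"
proof -
  have "omega n ^ m = omega n ^ (m mod n + n * (m div n))" by simp
  also have "\<dots> = omega n ^ (m mod n) * (omega n ^ n) ^ (m div n)" by (simp only: power_add power_mult)
  finally show ?thesis by (simp add: omega_pow_n)
qed

lemma omega_ne1: assumes "n \<ge> 2" shows "omega n \<noteq> 1"
proof
  assume "omega n = 1"
  hence "cos (2 * pi / real n) = 1" unfolding omega_def by (metis cis.sel(1) one_complex.sel(1))
  moreover have "0 < 2 * pi / real n" using assms by auto
  moreover have "2 * pi / real n \<le> pi" using assms by (simp add: field_simps)
  ultimately show False using cos_monotone_0_pi[of 0 "2 * pi / real n"] by simp
qed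

lemma cnj_omega_mult: "cnj (omega n) * omega n = 1"
  unfolding omega_def cis_cnj cis_mult by simp

definition Zs :: "nat \<Rightarrow> bits \<Rightarrow> nat set" where
  "Zs n b = {i. i < n \<and> \<not> b i}"

definition fz :: "nat \<Rightarrow> nat set \<Rightarrow> complex" where
  "fz n Z = (\<Sum>i\<in>Z. omega n ^ i)"

definition vform :: "nat \<Rightarrow> nat \<Rightarrow> qvec" where
  "vform n s b = (if b \<in> basis n \<and> card (Zs n b) = Suc s then of_nat (fact s) * fz n (Zs n b) else 0)"

lemma finite_Zs[simp]: "finite (Zs n b)"
  unfolding Zs_def by auto

lemma sigma_ones: assumes "j < n"
  shows "sigma_minus j (all_ones n) b = (if b = (\<lambda>i. i < n \<and> i \<noteq> j) then 1 else 0)"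
  using assms unfolding sigma_minus_def all_ones_def by (auto simp: fun_eq_iff)

lemma Psi_form: assumes "n \<ge> 1" shows "Psi n b = vform n 0 b"
proof -
  have Pb: "Psi n b = cnj (omega n) * (\<Sum>m\<in>{1..n}. omega n ^ m * (if b = (\<lambda>i. i < n \<and> i \<noteq> m - 1) then 1 else 0))"
  proof -
    have sm: "sigma_minus (m - 1) (all_ones n) b = (if b = (\<lambda>i. i < n \<and> i \<noteq> m - 1) then 1 else 0)" if "m \<in> {1..n}" for m
      by (rule sigma_ones) (use that in auto)
    have "(\<Sum>m\<in>{1..n}. omega n ^ m * sigma_minus (m - 1) (all_ones n) b) = (\<Sum>m\<in>{1..n}. omega n ^ m * (if b = (\<lambda>i. i < n \<and> i \<noteq> m - 1) then 1 else 0))"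
      by (rule sum.cong[OF refl]) (simp only: sm)
    thus ?thesis unfolding Psi_def by simp
  qed
  show ?thesis
  proof (cases "\<exists>j<n. b = (\<lambda>i. i < n \<and> i \<noteq> j)")
    case True
    then obtain j where j: "j < n" "b = (\<lambda>i. i < n \<and> i \<noteq> j)" by blast
    have Z: "Zs n b = {j}" using j unfolding Zs_def by auto
    have bb: "b \<in> basis n" using j unfolding basis_def by auto
    have eq: "(b = (\<lambda>i. i < n \<and> i \<noteq> m - 1)) = (m = Suc j)" if "m \<in> {1..n}" for m
    proof
      assume e: "b = (\<lambda>i. i < n \<and> i \<noteq> m - 1)"
      have "b j = (j < n \<and> j \<noteq> m - 1)" by (subst e) (rule refl)
      moreover have "\<not> b j" by (subst j(2)) simp
      ultimately show "m = Suc j" using that j(1) by auto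
    next
      assume "m = Suc j" thus "b = (\<lambda>i. i < n \<and> i \<noteq> m - 1)" using j(2) by simp
    qed
    have "(\<Sum>m\<in>{1..n}. omega n ^ m * (if b = (\<lambda>i. i < n \<and> i \<noteq> m - 1) then 1 else 0))
        = (\<Sum>m\<in>{1..n}. if m = Suc j then omega n ^ m else 0)"
      by (rule sum.cong[OF refl]) (subst eq, assumption, simp)
    also have "\<dots> = omega n ^ Suc j" using j(1) by (subst sum.delta) auto
    finally have "Psi n b = cnj (omega n) * omega n ^ Suc j" using Pb by (simp only:)
    also have "\<dots> = omega n ^ j" using cnj_omega_mult[of n] by (simp add: mult.assoc[symmetric])
    finally show ?thesis unfolding vform_def using Z bb by (simp add: fz_def)
  next
    case False
    have "(\<Sum>m\<in>{1..n}. omega n ^ m * (if b = (\<lambda>i. i < n \<and> i \<noteq> m - 1) then 1 else 0)) = 0"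
    proof (intro sum.neutral ballI)
      fix m assume "m \<in> {1..n}"
      hence "m - 1 < n" by auto
      hence "b \<noteq> (\<lambda>i. i < n \<and> i \<noteq> m - 1)" using False by blast
      thus "omega n ^ m * (if b = (\<lambda>i. i < n \<and> i \<noteq> m - 1) then 1 else 0) = 0" by simp
    qed
    moreover have "\<not> (b \<in> basis n \<and> card (Zs n b) = Suc 0)"
    proof
      assume a: "b \<in> basis n \<and> card (Zs n b) = Suc 0"
      then obtain j where "Zs n b = {j}" using card_1_singletonE[of "Zs n b"] a One_nat_def by metis
      hence jn: "j < n" unfolding Zs_def by auto
      have "b = (\<lambda>i. i < n \<and> i \<noteq> j)"
      proof
        fix i
        show "b i = (i < n \<and> i \<noteq> j)"
        proof (cases "i < n")
          case True
          have "(i \<in> Zs n b) = (i = j)" using \<open>Zs n b = {j}\<close> by auto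
          thus ?thesis using True unfolding Zs_def by auto
        next
          case False thus ?thesis using a unfolding basis_def by auto
        qed
      qed
      with jn show False using False by blast
    qed
    ultimately show ?thesis using Pb unfolding vform_def by (simp only:) simp
  qed
qed


lemma S_step: "S_minus n (vform n s) b = vform n (Suc s) b"
proof -
  have S: "S_minus n (vform n s) b = (\<Sum>k<n. if b k then 0 else vform n s (b(k := True)))"
    unfolding S_minus_def sigma_minus_def by simp
  show ?thesis
  proof (cases "b \<in> basis n")
    case False
    then obtain i where i: "i \<ge> n" "b i" unfolding basis_def by auto
    have "vform n s (b(k := True)) = 0" if "k < n" for k
    proof -
      have "(b(k := True)) i" using i that by auto
      hence "b(k := True) \<notin> basis n" using i unfolding basis_def by auto
      thus ?thesis unfolding vform_def by simp
    qed
    hence "S_minus n (vform n s) b = 0" unfolding S by (intro sum.neutral) auto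
    thus ?thesis using False unfolding vform_def by simp
  next
    case True
    let ?Z = "Zs n b"
    have Zeq: "?Z = {k \<in> {..<n}. \<not> b k}" unfolding Zs_def by auto
    have S2: "S_minus n (vform n s) b = (\<Sum>k\<in>?Z. vform n s (b(k := True)))"
      unfolding S Zeq by (subst sum.inter_filter) (auto intro: sum.cong)
    have vk: "vform n s (b(k := True)) = (if card ?Z - 1 = Suc s then of_nat (fact s) * (fz n ?Z - omega n ^ k) else 0)"
      if k: "k \<in> ?Z" for k
    proof -
      have kn: "k < n" "\<not> b k" using k unfolding Zs_def by auto
      have bb: "b(k := True) \<in> basis n" using True kn unfolding basis_def by auto
      have Zk: "Zs n (b(k := True)) = ?Z - {k}" unfolding Zs_def by auto
      have "card (Zs n (b(k := True))) = card ?Z - 1" unfolding Zk using k by simp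
      moreover have "fz n (Zs n (b(k := True))) = fz n ?Z - omega n ^ k"
        unfolding Zk fz_def using k by (simp add: sum_diff1)
      ultimately show ?thesis unfolding vform_def using bb by simp
    qed
    show ?thesis
    proof (cases "card ?Z = Suc (Suc s)")
      case c: True
      have "S_minus n (vform n s) b = (\<Sum>k\<in>?Z. of_nat (fact s) * (fz n ?Z - omega n ^ k))"
        unfolding S2 using c by (intro sum.cong refl) (simp add: vk)
      also have "\<dots> = of_nat (fact s) * (of_nat (card ?Z) * fz n ?Z - fz n ?Z)"
        by (simp add: sum_distrib_left[symmetric] sum_subtractf fz_def)
      also have "\<dots> = of_nat (fact (Suc s)) * fz n ?Z"
        using c by (simp add: algebra_simps)
      finally show ?thesis unfolding vform_def using True c by simp
    next
      case c: False
      have "S_minus n (vform n s) b = 0"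
        unfolding S2
      proof (intro sum.neutral ballI)
        fix k assume k: "k \<in> ?Z"
        hence "card ?Z \<ge> 1" by (metis One_nat_def Suc_leI card_gt_0_iff empty_iff finite_Zs)
        hence "card ?Z - 1 \<noteq> Suc s" using c by auto
        thus "vform n s (b(k := True)) = 0" using vk[OF k] by simp
      qed
      thus ?thesis unfolding vform_def using c by simp
    qed
  qed
qed

lemma Sv_form: assumes "n \<ge> 1" shows "(S_minus n ^^ s) (Psi n) = vform n s"
proof (induction s)
  case 0 show ?case using Psi_form[OF assms] by (simp add: fun_eq_iff)
next
  case (Suc s) show ?case by (simp add: Suc.IH) (simp add: fun_eq_iff S_step)
qed

definition nsq :: "nat \<Rightarrow> qvec \<Rightarrow> real" where
  "nsq n v = (\<Sum>b\<in>basis n. (cmod (v b))\<^sup>2)"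

definition join :: "nat \<Rightarrow> bits \<Rightarrow> bits \<Rightarrow> bits" where
  "join d a c = (\<lambda>i. if i < d then a i else c i)"

definition Bs :: "nat \<Rightarrow> nat \<Rightarrow> bits set" where
  "Bs d n = {c \<in> basis n. \<forall>i<d. \<not> c i}"

lemma nsq_nonneg: "nsq n v \<ge> 0"
  unfolding nsq_def by (intro sum_nonneg) auto

lemma norm_q_nsq: "norm_q n v = sqrt (nsq n v)"
  unfolding norm_q_def nsq_def ..

lemma finite_Bs: "finite (Bs d n)"
  unfolding Bs_def using finite_basis[of n] by auto

lemma split_sum:
  assumes "d \<le> n"
  shows "(\<Sum>b\<in>basis n. g b) = (\<Sum>a\<in>basis d. \<Sum>c\<in>Bs d n. g (join d a c))"
proof -
  let ?h = "\<lambda>(a, c). join d a c"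
  have inj: "inj_on ?h (basis d \<times> Bs d n)"
  proof (rule inj_onI, clarify)
    fix a c a' c'
    assume a: "a \<in> basis d" "c \<in> Bs d n" "a' \<in> basis d" "c' \<in> Bs d n" and e: "join d a c = join d a' c'"
    have "a i = a' i \<and> c i = c' i" for i
    proof (cases "i < d")
      case True
      have "join d a c i = join d a' c' i" using e by simp
      thus ?thesis using True a unfolding join_def Bs_def by auto
    next
      case False
      have "join d a c i = join d a' c' i" using e by simp
      thus ?thesis using False a unfolding join_def Bs_def basis_def by auto
    qed
    thus "a = a' \<and> c = c'" by (auto simp: fun_eq_iff)
  qed
  have img: "?h ` (basis d \<times> Bs d n) = basis n"
  proof
    show "?h ` (basis d \<times> Bs d n) \<subseteq> basis n"
      using assms unfolding join_def Bs_def basis_def by auto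
  next
    show "basis n \<subseteq> ?h ` (basis d \<times> Bs d n)"
    proof
      fix b assume b: "b \<in> basis n"
      have "b = ?h ((\<lambda>i. i < d \<and> b i), (\<lambda>i. d \<le> i \<and> b i))" unfolding join_def by auto
      moreover have "((\<lambda>i. i < d \<and> b i), (\<lambda>i. d \<le> i \<and> b i)) \<in> basis d \<times> Bs d n"
        using b unfolding basis_def Bs_def by auto
      ultimately show "b \<in> ?h ` (basis d \<times> Bs d n)" by blast
    qed
  qed
  have "(\<Sum>b\<in>basis n. g b) = (\<Sum>x\<in>basis d \<times> Bs d n. g (?h x))"
    using sum.reindex[OF inj, of g] img by simp
  also have "\<dots> = (\<Sum>a\<in>basis d. \<Sum>c\<in>Bs d n. g (join d a c))"
    by (simp add: sum.cartesian_product case_prod_unfold)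
  finally show ?thesis .
qed

lemma inner_CS: "cmod (inner_q n u w) \<le> sqrt (nsq n u) * sqrt (nsq n w)"
proof -
  have "cmod (inner_q n u w) \<le> (\<Sum>b\<in>basis n. cmod (cnj (u b) * w b))"
    unfolding inner_q_def by (rule norm_sum)
  also have "\<dots> = (\<Sum>b\<in>basis n. \<bar>cmod (u b)\<bar> * \<bar>cmod (w b)\<bar>)"
    by (simp add: norm_mult)
  also have "\<dots> \<le> L2_set (\<lambda>b. cmod (u b)) (basis n) * L2_set (\<lambda>b. cmod (w b)) (basis n)"
    by (rule L2_set_mult_ineq)
  finally show ?thesis unfolding L2_set_def nsq_def .
qed

lemma T_nsq:
  assumes dn: "d \<le> n" and F: "op_norm_le1 d F"
  shows "nsq n (tensor_id d F v) \<le> nsq n v"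
proof -
  define w where "w c = (\<lambda>a. v (join d a c))" for c
  have T: "tensor_id d F v (join d a' c) = apply_op d F (w c) a'" if "a' \<in> basis d" for a' c
  proof -
    have "(\<lambda>i. i < d \<and> join d a' c i) = a'" using that unfolding join_def basis_def by (auto simp: fun_eq_iff)
    moreover have "(\<lambda>i. if i < d then a i else join d a' c i) = join d a c" for a
      unfolding join_def by auto
    ultimately show ?thesis unfolding tensor_id_def apply_op_def w_def by simp
  qed
  have "nsq n (tensor_id d F v) = (\<Sum>a'\<in>basis d. \<Sum>c\<in>Bs d n. (cmod (tensor_id d F v (join d a' c)))\<^sup>2)"
    unfolding nsq_def by (rule split_sum[OF dn])
  also have "\<dots> = (\<Sum>c\<in>Bs d n. \<Sum>a'\<in>basis d. (cmod (apply_op d F (w c) a'))\<^sup>2)"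
    by (subst sum.swap) (intro sum.cong refl, simp add: T)
  also have "\<dots> \<le> (\<Sum>c\<in>Bs d n. \<Sum>a\<in>basis d. (cmod (w c a))\<^sup>2)"
  proof (rule sum_mono)
    fix c
    have "norm_q d (apply_op d F (w c)) \<le> norm_q d (w c)" using F unfolding op_norm_le1_def by blast
    hence "sqrt (nsq d (apply_op d F (w c))) \<le> sqrt (nsq d (w c))" by (simp add: norm_q_nsq)
    hence "nsq d (apply_op d F (w c)) \<le> nsq d (w c)" by simp
    thus "(\<Sum>a'\<in>basis d. (cmod (apply_op d F (w c) a'))\<^sup>2) \<le> (\<Sum>a\<in>basis d. (cmod (w c a))\<^sup>2)"
      unfolding nsq_def .
  qed
  also have "\<dots> = nsq n v"
    unfolding nsq_def w_def by (subst split_sum[OF dn]) (rule sum.swap)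
  finally show ?thesis .
qed


lemma T_add: "tensor_id d F (\<lambda>b. u b + w b) = (\<lambda>b. tensor_id d F u b + tensor_id d F w b)"
  unfolding tensor_id_def by (simp add: fun_eq_iff distrib_left sum.distrib)

lemma inner_add1: "inner_q n (\<lambda>b. u b + w b) x = inner_q n u x + inner_q n w x"
  unfolding inner_q_def by (simp add: distrib_right sum.distrib)

lemma inner_add2: "inner_q n x (\<lambda>b. u b + w b) = inner_q n x u + inner_q n x w"
  unfolding inner_q_def by (simp add: distrib_left sum.distrib)

lemma inner_T_bound:
  assumes "d \<le> n" "op_norm_le1 d F"
  shows "cmod (inner_q n u (tensor_id d F w)) \<le> sqrt (nsq n u) * sqrt (nsq n w)"
proof -
  have "cmod (inner_q n u (tensor_id d F w)) \<le> sqrt (nsq n u) * sqrt (nsq n (tensor_id d F w))"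
    by (rule inner_CS)
  also have "\<dots> \<le> sqrt (nsq n u) * sqrt (nsq n w)"
    using T_nsq[OF assms, of w] nsq_nonneg[of n u] by (intro mult_left_mono) (auto)
  finally show ?thesis .
qed

lemma main_est:
  assumes dn: "d \<le> n" and F: "op_norm_le1 d F" and nv: "nsq n \<psi> = 1"
  defines "p \<equiv> (\<Sum>b\<in>basis n. if \<forall>i<d. b i then (cmod (\<psi> b))\<^sup>2 else 0)"
  shows "cmod (expect n \<psi> (tensor_id d F) - F (\<lambda>i. i < d) (\<lambda>i. i < d) * p) \<le> 3 * sqrt (1 - p)"
proof -
  define oA :: bits where "oA = (\<lambda>i. i < d)"
  define \<psi>1 where "\<psi>1 b = (if \<forall>i<d. b i then \<psi> b else 0)" for b
  define \<psi>2 where "\<psi>2 b = (if \<forall>i<d. b i then 0 else \<psi> b)" for b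
  let ?T = "tensor_id d F"
  have psi_eq: "\<psi> = (\<lambda>b. \<psi>1 b + \<psi>2 b)" unfolding \<psi>1_def \<psi>2_def by (auto simp: fun_eq_iff)
  have n1: "nsq n \<psi>1 = p" unfolding nsq_def p_def \<psi>1_def by (intro sum.cong) auto
  have n12: "nsq n \<psi> = nsq n \<psi>1 + nsq n \<psi>2"
    unfolding nsq_def \<psi>1_def \<psi>2_def by (subst sum.distrib[symmetric]) (intro sum.cong, auto)
  hence n2: "nsq n \<psi>2 = 1 - p" using nv n1 by simp
  have p0: "p \<ge> 0" using n1 nsq_nonneg by metis
  have p1: "p \<le> 1" using n2 nsq_nonneg by (metis diff_ge_0_iff_ge)
  have Tpsi1: "?T \<psi>1 b = F (\<lambda>i. i < d \<and> b i) oA * \<psi> (\<lambda>i. if i < d then True else b i)" for b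
  proof -
    have "?T \<psi>1 b = (\<Sum>a\<in>basis d. if a = oA then F (\<lambda>i. i < d \<and> b i) oA * \<psi> (\<lambda>i. if i < d then True else b i) else 0)"
      unfolding tensor_id_def
    proof (intro sum.cong refl)
      fix a assume a: "a \<in> basis d"
      have iff: "(\<forall>i<d. (if i < d then a i else b i)) = (a = oA)"
        using a unfolding basis_def oA_def by (auto simp: fun_eq_iff) (metis not_le)
      show "F (\<lambda>i. i < d \<and> b i) a * \<psi>1 (\<lambda>i. if i < d then a i else b i) =
         (if a = oA then F (\<lambda>i. i < d \<and> b i) oA * \<psi> (\<lambda>i. if i < d then True else b i) else 0)"
        unfolding \<psi>1_def iff by (auto simp: oA_def)
    qed
    also have "\<dots> = F (\<lambda>i. i < d \<and> b i) oA * \<psi> (\<lambda>i. if i < d then True else b i)"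
      using finite_basis[of d] by (subst sum.delta) (auto simp: oA_def basis_def)
    finally show ?thesis .
  qed
  have main: "inner_q n \<psi>1 (?T \<psi>1) = F oA oA * p"
  proof -
    have "inner_q n \<psi>1 (?T \<psi>1) = (\<Sum>b\<in>basis n. F oA oA * (if \<forall>i<d. b i then of_real ((cmod (\<psi> b))\<^sup>2) else 0))"
      unfolding inner_q_def
    proof (intro sum.cong refl)
      fix b
      show "cnj (\<psi>1 b) * ?T \<psi>1 b = F oA oA * (if \<forall>i<d. b i then of_real ((cmod (\<psi> b))\<^sup>2) else 0)"
      proof (cases "\<forall>i<d. b i")
        case True
        have e1: "(\<lambda>i. i < d \<and> b i) = oA" using True unfolding oA_def by auto
        have e2: "(\<lambda>i. if i < d then True else b i) = b" using True by auto
        have sq: "\<psi> b * cnj (\<psi> b) = (complex_of_real (cmod (\<psi> b)))\<^sup>2"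
          by (metis complex_norm_square of_real_power)
        show ?thesis unfolding Tpsi1 e1 e2 \<psi>1_def using True sq
          by (simp add: mult.commute mult.left_commute)
      next
        case False
        hence "\<psi>1 b = 0" unfolding \<psi>1_def by auto
        thus ?thesis by (subst if_not_P[OF False]) simp
      qed
    qed
    also have "\<dots> = F oA oA * of_real p"
      unfolding p_def by (simp add: sum_distrib_left[symmetric] if_distrib[where f=of_real] cong: if_cong)
    finally show ?thesis by simp
  qed
  have "expect n \<psi> ?T = inner_q n \<psi>1 (?T \<psi>1) + inner_q n \<psi>1 (?T \<psi>2) + (inner_q n \<psi>2 (?T \<psi>1) + inner_q n \<psi>2 (?T \<psi>2))"
    unfolding expect_def by (subst (1 2) psi_eq) (simp only: T_add inner_add1 inner_add2)
  hence "expect n \<psi> ?T - F oA oA * p = inner_q n \<psi>1 (?T \<psi>2) + inner_q n \<psi>2 (?T \<psi>1) + inner_q n \<psi>2 (?T \<psi>2)"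
    using main by simp
  hence "cmod (expect n \<psi> ?T - F oA oA * p) \<le> cmod (inner_q n \<psi>1 (?T \<psi>2)) + cmod (inner_q n \<psi>2 (?T \<psi>1)) + cmod (inner_q n \<psi>2 (?T \<psi>2))"
    by (simp only:) (rule order_trans[OF norm_triangle_ineq add_right_mono[OF norm_triangle_ineq]])
  also have "\<dots> \<le> sqrt p * sqrt (1 - p) + sqrt (1 - p) * sqrt p + sqrt (1 - p) * sqrt (1 - p)"
    by (intro add_mono inner_T_bound[OF dn F, of \<psi>1 \<psi>2, unfolded n1 n2]
        inner_T_bound[OF dn F, of \<psi>2 \<psi>1, unfolded n1 n2] inner_T_bound[OF dn F, of \<psi>2 \<psi>2, unfolded n1 n2])
  also have "\<dots> \<le> 3 * sqrt (1 - p)"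
  proof -
    have s1: "sqrt p \<le> 1" using p1 by simp
    have s2: "sqrt (1 - p) \<le> 1" using p0 p1 by simp
    have s0: "sqrt (1 - p) \<ge> 0" using p1 by simp
    have "sqrt p * sqrt (1 - p) \<le> sqrt (1 - p)" using mult_right_mono[OF s1 s0] by simp
    moreover have "sqrt (1 - p) * sqrt (1 - p) \<le> sqrt (1 - p)" using mult_right_mono[OF s2 s0] by simp
    ultimately show ?thesis by (simp add: mult.commute)
  qed
  finally show ?thesis unfolding oA_def .
qed

lemma mod_add_small: "j < n \<Longrightarrow> u < (n::nat) \<Longrightarrow> (j + u) mod n = (if j + u < n then j + u else j + u - n)"
proof -
  assume a: "j < n" "u < n"
  show ?thesis
  proof (cases "j + u < n")
    case True thus ?thesis by simp
  next
    case False
    hence "j + u - n < n" using a by linarith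
    moreover have "(j + u) mod n = (j + u - n) mod n" using False by (simp add: le_mod_geq)
    ultimately show ?thesis using False by simp
  qed
qed

lemma modinj: assumes "(j + t) mod n = (j' + t) mod (n::nat)" "j < n" "j' < n" shows "j = j'"
proof -
  have n: "n > 0" using assms by auto
  have "(j + t mod n) mod n = (j' + t mod n) mod n" using assms(1) by (metis mod_add_right_eq)
  moreover have "t mod n < n" using n by simp
  ultimately show ?thesis using assms(2,3) mod_add_small[of j n "t mod n"] mod_add_small[of j' n "t mod n"]
    by (simp split: if_splits)
qed

lemma modbij: fixes n t :: nat assumes "n > 0" shows "bij_betw (\<lambda>j. (j + t) mod n) {..<n} {..<n}"
proof -
  have inj: "inj_on (\<lambda>j. (j + t) mod n) {..<n}"
  proof (rule inj_onI)
    fix x y assume "x \<in> {..<n}" "y \<in> {..<n}" "(x + t) mod n = (y + t) mod n"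
    thus "x = y" using modinj[of x t n y] by simp
  qed
  moreover have "(\<lambda>j. (j + t) mod n) ` {..<n} = {..<n}"
    by (rule endo_inj_surj[OF _ _ inj]) (use assms in auto)
  ultimately show ?thesis unfolding bij_betw_def by blast
qed

definition rot :: "nat \<Rightarrow> nat \<Rightarrow> bits \<Rightarrow> bits" where
  "rot n t c = (\<lambda>j. if j < n then c ((j + t) mod n) else c j)"

lemma rot_bij: assumes "n > 0" shows "bij_betw (rot n t) (basis n) (basis n)"
proof -
  have sub: "rot n t ` basis n \<subseteq> basis n" unfolding rot_def basis_def by auto
  have inj: "inj_on (rot n t) (basis n)"
  proof (rule inj_onI)
    fix c1 c2 assume c: "c1 \<in> basis n" "c2 \<in> basis n" and e: "rot n t c1 = rot n t c2"
    show "c1 = c2"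
    proof
      fix i show "c1 i = c2 i"
      proof (cases "i < n")
        case True
        hence "i \<in> (\<lambda>j. (j + t) mod n) ` {..<n}" using bij_betw_imp_surj_on[OF modbij[OF assms, of t]] by simp
        then obtain j where j0: "i = (j + t) mod n" "j \<in> {..<n}" by (rule imageE)
        hence j: "j < n" "(j + t) mod n = i" by auto
        have "rot n t c1 j = rot n t c2 j" using e by simp
        thus ?thesis using j unfolding rot_def by simp
      next
        case False thus ?thesis using c unfolding basis_def by auto
      qed
    qed
  qed
  have "rot n t ` basis n = basis n" by (rule endo_inj_surj[OF finite_basis sub inj])
  thus ?thesis using inj unfolding bij_betw_def by blast
qed

lemma Zs_rot: assumes "n > 0"
  shows "(\<lambda>j. (j + t) mod n) ` Zs n (rot n t c) = Zs n c"
    and "inj_on (\<lambda>j. (j + t) mod n) (Zs n (rot n t c))"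
proof -
  have b: "bij_betw (\<lambda>j. (j + t) mod n) {..<n} {..<n}" by (rule modbij[OF assms])
  show "inj_on (\<lambda>j. (j + t) mod n) (Zs n (rot n t c))"
    using bij_betw_imp_inj_on[OF b] unfolding Zs_def by (rule inj_on_subset) auto
  show "(\<lambda>j. (j + t) mod n) ` Zs n (rot n t c) = Zs n c"
  proof
    show "(\<lambda>j. (j + t) mod n) ` Zs n (rot n t c) \<subseteq> Zs n c"
      using assms unfolding Zs_def rot_def by auto
  next
    show "Zs n c \<subseteq> (\<lambda>j. (j + t) mod n) ` Zs n (rot n t c)"
    proof
      fix i assume i: "i \<in> Zs n c"
      hence "i < n" unfolding Zs_def by auto
      hence "i \<in> (\<lambda>j. (j + t) mod n) ` {..<n}" using bij_betw_imp_surj_on[OF b] by simp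
      then obtain j where j0: "i = (j + t) mod n" "j \<in> {..<n}" by (rule imageE)
      hence j: "j < n" "(j + t) mod n = i" by auto
      hence "j \<in> Zs n (rot n t c)" using i unfolding Zs_def rot_def by auto
      thus "i \<in> (\<lambda>j. (j + t) mod n) ` Zs n (rot n t c)" using j by blast
    qed
  qed
qed

lemma vform_rot: assumes "n > 0"
  shows "cmod (vform n s (rot n t c)) = cmod (vform n s c)"
proof -
  have bas: "(rot n t c \<in> basis n) = (c \<in> basis n)"
    unfolding basis_def rot_def by auto
  have card: "card (Zs n (rot n t c)) = card (Zs n c)"
    using card_image[OF Zs_rot(2)[OF assms, of t c]] Zs_rot(1)[OF assms, of t c] by simp
  have "fz n (Zs n (rot n t c)) * omega n ^ t = (\<Sum>j\<in>Zs n (rot n t c). omega n ^ ((j + t) mod n))"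
    unfolding fz_def by (simp add: sum_distrib_right omega_pow_mod power_add)
  also have "\<dots> = fz n (Zs n c)"
    unfolding fz_def using sum.reindex[OF Zs_rot(2)[OF assms, of t c], of "\<lambda>i. omega n ^ i"] Zs_rot(1)[OF assms, of t c]
    by (simp add: comp_def)
  finally have e: "fz n (Zs n (rot n t c)) * omega n ^ t = fz n (Zs n c)" .
  have o: "cmod (omega n ^ t) = 1" by (simp add: norm_power omega_norm)
  have "cmod (fz n (Zs n c)) = cmod (fz n (Zs n (rot n t c))) * cmod (omega n ^ t)"
    unfolding e[symmetric] by (rule norm_mult)
  hence "cmod (fz n (Zs n (rot n t c))) = cmod (fz n (Zs n c))" using o by simp
  thus ?thesis unfolding vform_def bas card by (simp add: norm_mult)
qed

lemma prob_bound:
  fixes g :: "bits \<Rightarrow> real"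
  assumes n: "n > 0" and dn: "d \<le> n" and g0: "\<And>b. g b \<ge> 0"
    and sum1: "(\<Sum>b\<in>basis n. g b) = 1"
    and supp: "\<And>b. b \<in> basis n \<Longrightarrow> g b \<noteq> 0 \<Longrightarrow> card (Zs n b) = k"
    and rotinv: "\<And>c t. c \<in> basis n \<Longrightarrow> g (rot n t c) = g c"
  shows "(\<Sum>b\<in>basis n. if \<forall>i<d. b i then 0 else g b) \<le> real d * real k / real n"
proof -
  define q where "q i = (\<Sum>b\<in>basis n. if b i then 0 else g b)" for i
  have qi: "q i = q 0" if i: "i < n" for i
  proof -
    have "q 0 = (\<Sum>c\<in>basis n. (\<lambda>b. if b 0 then 0 else g b) (rot n i c))"
      unfolding q_def by (rule sum.reindex_bij_betw[OF rot_bij[OF n], symmetric])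
    also have "\<dots> = q i" unfolding q_def
    proof (intro sum.cong refl)
      fix c assume c: "c \<in> basis n"
      have "rot n i c 0 = c i" unfolding rot_def using n i by simp
      thus "(\<lambda>b. if b 0 then 0 else g b) (rot n i c) = (if c i then 0 else g c)"
        using rotinv[OF c] by simp
    qed
    finally show ?thesis by simp
  qed
  have inner: "(\<Sum>i<n. if b i then 0 else g b) = g b * real (card (Zs n b))" for b
  proof -
    have "(\<Sum>i<n. if b i then 0 else g b) = (\<Sum>i\<in>{i\<in>{..<n}. \<not> b i}. g b)"
      by (subst sum.inter_filter) (auto intro: sum.cong)
    also have "{i\<in>{..<n}. \<not> b i} = Zs n b" unfolding Zs_def by auto
    finally show ?thesis by simp
  qed
  have "(\<Sum>i<n. q i) = (\<Sum>b\<in>basis n. \<Sum>i<n. if b i then 0 else g b)"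
    unfolding q_def by (rule sum.swap)
  also have "\<dots> = (\<Sum>b\<in>basis n. g b * real k)"
  proof (intro sum.cong refl)
    fix b assume b: "b \<in> basis n"
    show "(\<Sum>i<n. if b i then 0 else g b) = g b * real k"
    proof (cases "g b = 0")
      case True thus ?thesis unfolding inner by simp
    next
      case False thus ?thesis unfolding inner using supp[OF b False] by simp
    qed
  qed
  also have "\<dots> = real k" using sum1 by (simp add: sum_distrib_right[symmetric])
  finally have sq: "(\<Sum>i<n. q i) = real k" .
  have "(\<Sum>i<n. q i) = (\<Sum>i<n. q 0)" by (rule sum.cong[OF refl], rule qi, simp)
  hence q0: "real n * q 0 = real k" using sq by simp
  have "(\<Sum>b\<in>basis n. if \<forall>i<d. b i then 0 else g b) \<le> (\<Sum>b\<in>basis n. \<Sum>i<d. if b i then 0 else g b)"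
  proof (rule sum_mono)
    fix b assume b: "b \<in> basis n"
    show "(if \<forall>i<d. b i then 0 else g b) \<le> (\<Sum>i<d. if b i then 0 else g b)"
    proof (cases "\<forall>i<d. b i")
      case True
      thus ?thesis by (simp add: sum_nonneg g0)
    next
      case False
      then obtain i0 where i0: "i0 < d" "\<not> b i0" by blast
      have "g b = (if b i0 then 0 else g b)" using i0 by simp
      also have "\<dots> \<le> (\<Sum>i<d. if b i then 0 else g b)"
        by (rule member_le_sum) (use i0 g0 in auto)
      finally show ?thesis using False by simp
    qed
  qed
  also have "\<dots> = (\<Sum>i<d. q i)" unfolding q_def by (rule sum.swap)
  also have "\<dots> = (\<Sum>i<d. q 0)" using dn by (intro sum.cong refl, intro qi) auto
  also have "\<dots> = real d * q 0" by simp
  also have "\<dots> = real d * real k / real n" using q0 n by (simp add: field_simps)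
  finally show ?thesis .
qed

lemma F11_bound:
  assumes F: "op_norm_le1 d F"
  shows "cmod (F (\<lambda>i. i < d) (\<lambda>i. i < d)) \<le> 1"
proof -
  define oA :: bits where "oA = (\<lambda>i. i < d)"
  have oAb: "oA \<in> basis d" unfolding oA_def basis_def by auto
  define v :: qvec where "v a = (if a = oA then 1 else 0)" for a
  have av: "apply_op d F v b = F b oA" for b
    unfolding apply_op_def v_def using oAb finite_basis[of d]
    by (simp add: if_distrib[where f="\<lambda>x. F b _ * x"] cong: if_cong)
  have nv: "norm_q d v = 1"
    unfolding norm_q_def v_def using oAb finite_basis[of d]
    by (simp add: if_distrib[where f="\<lambda>x. (cmod x)\<^sup>2"] cong: if_cong)
  have "(cmod (F oA oA))\<^sup>2 \<le> (\<Sum>b\<in>basis d. (cmod (apply_op d F v b))\<^sup>2)"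
    unfolding av by (rule member_le_sum) (use oAb finite_basis[of d] in auto)
  hence "sqrt ((cmod (F oA oA))\<^sup>2) \<le> norm_q d (apply_op d F v)"
    unfolding norm_q_def by (rule real_sqrt_le_mono)
  also have "\<dots> \<le> 1" using F nv unfolding op_norm_le1_def by metis
  finally show ?thesis unfolding oA_def by simp
qed

lemma nonvanish:
  assumes n: "n \<ge> 2" and s: "s \<le> n - 2"
  shows "\<exists>b\<in>basis n. vform n s b \<noteq> 0"
proof -
  define bZ where "bZ Z = (\<lambda>i. i < n \<and> i \<notin> Z)" for Z :: "nat set"
  have bZ: "bZ Z \<in> basis n" "Zs n (bZ Z) = Z" if "Z \<subseteq> {..<n}" for Z
    using that unfolding bZ_def basis_def Zs_def by auto
  define Y where "Y = {2..<s+2}"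
  have Y: "Y \<subseteq> {..<n}" "card Y = s" "0 \<notin> Y" "1 \<notin> Y" "finite Y"
    using n s unfolding Y_def by auto
  have vf: "vform n s (bZ (insert j Y)) = of_nat (fact s) * (omega n ^ j + fz n Y)" if "j < 2" for j
  proof -
    have sub: "insert j Y \<subseteq> {..<n}" using Y that n by auto
    have jY: "j \<notin> Y" using that Y by (cases j) auto
    show ?thesis unfolding vform_def using bZ[OF sub] jY Y by (simp add: fz_def)
  qed
  have "omega n \<noteq> 1" by (rule omega_ne1[OF n])
  hence "omega n ^ 0 + fz n Y \<noteq> 0 \<or> omega n ^ 1 + fz n Y \<noteq> 0"
    by (metis add_right_cancel power_0 power_one_right)
  moreover have "(0::nat) < 2" "(1::nat) < 2" by simp_all
  ultimately obtain j where j: "j < 2" "omega n ^ j + fz n Y \<noteq> 0" by blast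
  have "vform n s (bZ (insert j Y)) \<noteq> 0" unfolding vf[OF j(1)] using j(2) by simp
  moreover have "insert j Y \<subseteq> {..<n}" using Y j n by auto
  ultimately show ?thesis using bZ by blast
qed

lemma per_state:
  assumes n: "n \<ge> 2" and s: "s \<le> n - 2" and dn: "d \<le> n" and F: "op_norm_le1 d F"
  shows "\<exists>p. 0 \<le> 1 - p \<and> 1 - p \<le> 1 \<and> 1 - p \<le> real d * real (Suc s) / real n \<and>
     cmod (expect n (psi n s) (tensor_id d F) - F (\<lambda>i. i < d) (\<lambda>i. i < d) * p) \<le> 3 * sqrt (1 - p)"
proof -
  define v where "v = vform n s"
  define N where "N = nsq n v"
  obtain b0 where b0: "b0 \<in> basis n" "v b0 \<noteq> 0" using nonvanish[OF n s] unfolding v_def by blast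
  have "(cmod (v b0))\<^sup>2 \<le> N" unfolding N_def nsq_def
    by (rule member_le_sum) (use b0 finite_basis[of n] in auto)
  moreover have "(cmod (v b0))\<^sup>2 > 0" using b0 by simp
  ultimately have Npos: "N > 0" by linarith
  have psi: "psi n s = (\<lambda>b. v b / of_real (sqrt N))"
  proof -
    have "n \<ge> 1" using n by simp
    thus ?thesis unfolding psi_def Let_def Sv_form[OF \<open>n \<ge> 1\<close>] by (simp add: v_def N_def norm_q_nsq)
  qed
  define g where "g b = (cmod (psi n s b))\<^sup>2" for b
  have g: "g b = (cmod (v b))\<^sup>2 / N" for b
    unfolding g_def psi using Npos by (simp add: norm_divide power_divide)
  have g0: "g b \<ge> 0" for b unfolding g_def by simp
  have sum1: "(\<Sum>b\<in>basis n. g b) = 1"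
    unfolding g using Npos by (simp add: sum_divide_distrib[symmetric] N_def nsq_def)
  have nsq1: "nsq n (psi n s) = 1" using sum1 unfolding nsq_def g_def .
  define p where "p = (\<Sum>b\<in>basis n. if \<forall>i<d. b i then (cmod (psi n s b))\<^sup>2 else 0)"
  have est: "cmod (expect n (psi n s) (tensor_id d F) - F (\<lambda>i. i < d) (\<lambda>i. i < d) * p) \<le> 3 * sqrt (1 - p)"
    unfolding p_def by (rule main_est[OF dn F nsq1])
  have omp: "1 - p = (\<Sum>b\<in>basis n. if \<forall>i<d. b i then 0 else g b)"
  proof -
    have "(\<Sum>b\<in>basis n. g b) = p + (\<Sum>b\<in>basis n. if \<forall>i<d. b i then 0 else g b)"
      unfolding p_def g_def by (subst sum.distrib[symmetric]) (intro sum.cong, auto)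
    thus ?thesis using sum1 by simp
  qed
  have a: "0 \<le> 1 - p" unfolding omp by (intro sum_nonneg) (auto simp: g0)
  have p0: "0 \<le> p" unfolding p_def by (intro sum_nonneg) auto
  have supp: "card (Zs n b) = Suc s" if "b \<in> basis n" "g b \<noteq> 0" for b
  proof -
    have "v b \<noteq> 0" using that(2) unfolding g by auto
    thus ?thesis unfolding v_def vform_def by (auto split: if_splits)
  qed
  have rotinv: "g (rot n t c) = g c" for c t
    unfolding g v_def using vform_rot[of n s t c] n by simp
  have "1 - p \<le> real d * real (Suc s) / real n"
    unfolding omp by (rule prob_bound[OF _ dn g0 sum1 supp rotinv]) (use n in auto)
  thus ?thesis using a p0 est by (intro exI[of _ p]) auto
qed

lemma min_sqrt: assumes "0 \<le> a" "a \<le> 1" "a \<le> x" shows "a \<le> sqrt x"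
proof (cases "x \<le> 1")
  case True
  have x0: "0 \<le> x" using assms by simp
  have "sqrt x \<le> 1" using True by simp
  hence "sqrt x * sqrt x \<le> sqrt x * 1" using x0 by (intro mult_left_mono) auto
  hence "x \<le> sqrt x" using x0 by simp
  thus ?thesis using assms by simp
next
  case False
  hence "1 \<le> sqrt x" by simp
  thus ?thesis using assms(2) by linarith
qed


theorem theorem7:
  shows "\<exists>C::real. \<exists>N::nat. \<forall>n\<ge>N. \<forall>d\<le>n. \<forall>F::qop. op_norm_le1 d F \<longrightarrow>
     (\<forall>s0 r s. s0 \<le> n - 2 \<and> r \<le> s0 \<and> s \<le> s0 \<longrightarrow>
        cmod (expect n (psi n s) (tensor_id d F) - expect n (psi n r) (tensor_id d F))
          \<le> C * sqrt (real d * real s0 / real n))"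
proof (rule exI[of _ 11], rule exI[of _ 2], intro allI impI, elim conjE)
  fix n d F s0 r s
  assume n: "2 \<le> n" and dn: "d \<le> n" and F: "op_norm_le1 d F" and s0: "s0 \<le> n - 2"
    and r: "r \<le> s0" and s: "s \<le> s0"
  let ?E = "\<lambda>t. expect n (psi n t) (tensor_id d F)"
  let ?F = "F (\<lambda>i. i < d) (\<lambda>i. i < d)"
  define y where "y = real d * real s0 / real n"
  have y0: "0 \<le> y" unfolding y_def by simp
  show "cmod (?E s - ?E r) \<le> 11 * sqrt (real d * real s0 / real n)"
  proof (cases "s0 = 0")
    case True
    hence "s = r" using r s by simp
    thus ?thesis by simp
  next
    case False
    define x where "x = real d * real (Suc s0) / real n"
    have xy: "x \<le> 2 * y"
    proof -
      have "real (Suc s0) \<le> 2 * real s0" using False by simp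
      hence "real d * real (Suc s0) \<le> real d * (2 * real s0)" by (intro mult_left_mono) auto
      thus ?thesis unfolding x_def y_def by (simp add: divide_right_mono)
    qed
    obtain ps where ps: "0 \<le> 1 - ps" "1 - ps \<le> 1" "1 - ps \<le> real d * real (Suc s) / real n"
      "cmod (?E s - ?F * ps) \<le> 3 * sqrt (1 - ps)"
      using per_state[OF n _ dn F, of s] s s0 by auto
    obtain pr where pr: "0 \<le> 1 - pr" "1 - pr \<le> 1" "1 - pr \<le> real d * real (Suc r) / real n"
      "cmod (?E r - ?F * pr) \<le> 3 * sqrt (1 - pr)"
      using per_state[OF n _ dn F, of r] r s0 by auto
    have mono: "real d * real (Suc t) / real n \<le> x" if "t \<le> s0" for t
      unfolding x_def using that by (intro divide_right_mono mult_left_mono) auto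
    have xs: "1 - ps \<le> x" using ps(3) mono[OF s] by linarith
    have xr: "1 - pr \<le> x" using pr(3) mono[OF r] by linarith
    have sq1: "sqrt (1 - ps) \<le> sqrt x" using xs by simp
    have sq2: "sqrt (1 - pr) \<le> sqrt x" using xr by simp
    have dif: "\<bar>ps - pr\<bar> \<le> sqrt x"
    proof -
      have "\<bar>ps - pr\<bar> \<le> max (1 - ps) (1 - pr)" using ps pr by auto
      also have "\<dots> \<le> sqrt x" using min_sqrt[OF ps(1,2) xs] min_sqrt[OF pr(1,2) xr] by simp
      finally show ?thesis .
    qed
    have F11: "cmod ?F \<le> 1" by (rule F11_bound[OF F])
    have "?E s - ?E r = (?E s - ?F * ps) - (?E r - ?F * pr) + ?F * of_real (ps - pr)"
      by (simp add: algebra_simps)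
    hence "cmod (?E s - ?E r) \<le> cmod ((?E s - ?F * ps) - (?E r - ?F * pr)) + cmod (?F * of_real (ps - pr))"
      by (simp only: norm_triangle_ineq)
    also have "\<dots> \<le> cmod (?E s - ?F * ps) + cmod (?E r - ?F * pr) + cmod (?F * of_real (ps - pr))"
      by (intro add_right_mono norm_triangle_ineq4)
    also have "\<dots> \<le> 3 * sqrt x + 3 * sqrt x + 1 * sqrt x"
    proof -
      have e: "cmod (?F * of_real (ps - pr)) = cmod ?F * \<bar>ps - pr\<bar>" by (simp only: norm_mult norm_of_real)
      have t1: "cmod (?E s - ?F * ps) \<le> 3 * sqrt x" using ps(4) sq1 by linarith
      have t2: "cmod (?E r - ?F * pr) \<le> 3 * sqrt x" using pr(4) sq2 by linarith
      have t3: "cmod ?F * \<bar>ps - pr\<bar> \<le> 1 * sqrt x" using F11 dif by (intro mult_mono) auto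
      show ?thesis unfolding e using t1 t2 t3 by linarith
    qed
    also have "\<dots> = 7 * sqrt x" by simp
    also have "\<dots> \<le> 7 * (sqrt 2 * sqrt y)"
      using xy by (simp add: real_sqrt_mult[symmetric])
    also have "\<dots> \<le> 11 * sqrt y"
    proof -
      have "sqrt 2 \<le> 11 / 7" by (rule real_le_lsqrt) (auto simp: power2_eq_square)
      hence "7 * sqrt 2 \<le> 11" by simp
      thus ?thesis using y0 by (simp add: mult.assoc[symmetric] mult_right_mono)
    qed
    finally show ?thesis by (simp only: y_def)
  qed
qed

end
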